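(* Let $p_1=2,p_2,p_3,\dots$ be the consecutive primes, let $\chi$ be any Dirichlet character, and let $n\ge31$ (so $p_n\ge127$). Then $$B_\chi=R_1\,A\,L(2,\chi)L(3,\chi)L(4,\chi)\prod_{k=1}^{n}\Bigl(1+\frac{\chi(p_k)}{p_k(p_k^2-p_k-1)}\Bigr)\Bigl(1-\frac{\chi(p_k)}{p_k^3}\Bigr)\Bigl(1-\frac{\chi(p_k)}{p_k^4}\Bigr)$$ for a complex number $R_1$ satisfying $$\frac{1}{1+p_{n+1}^{-3.85}}\le|R_1|\le1+\frac{1}{p_{n+1}^{3.85}}.$$
   Context: $A=\prod_p\bigl(1-\frac{1}{p(p-1)}\bigr)$ (Artin's constant, product over primes). For a Dirichlet character $\chi$, $L(s,\chi)=\sum_{n\ge1}\chi(n)n^{-s}$ and $B_\chi=\prod_p\Bigl(1+\frac{(\chi(p)-1)p}{(p^2-\chi(p))(p-1)}\Bigr)$, the product over all primes $p$. *)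

theory Defs
  imports "HOL-Analysis.Analysis" "HOL-Computational_Algebra.Primes" "HOL-Library.Infinite_Set"
begin

definition dirichlet_character :: "nat \<Rightarrow> (nat \<Rightarrow> complex) \<Rightarrow> bool" where
  "dirichlet_character q chi \<longleftrightarrow> q > 0 \<and> chi 1 = 1 \<and>
     (\<forall>m n. chi (m * n) = chi m * chi n) \<and>
     (\<forall>n. chi (n + q) = chi n) \<and>
     (\<forall>n. chi n \<noteq> 0 \<longleftrightarrow> coprime n q)"

text \<open>p_k with 1-based indexing: prime_seq 1 = 2, prime_seq 2 = 3, ...\<close>
definition prime_seq :: "nat \<Rightarrow> nat" where
  "prime_seq k = Infinite_Set.enumerate {p. prime p} (k - 1)"

definition dirichlet_L :: "(nat \<Rightarrow> complex) \<Rightarrow> nat \<Rightarrow> complex" where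
  "dirichlet_L chi s = (\<Sum>n. chi (Suc n) / of_nat (Suc n) ^ s)"

definition artin_A :: real where
  "artin_A = (\<Prod>k. 1 - 1 / (real (prime_seq (Suc k)) * (real (prime_seq (Suc k)) - 1)))"

definition B_char :: "(nat \<Rightarrow> complex) \<Rightarrow> complex" where
  "B_char chi = (\<Prod>k. (let p = prime_seq (Suc k) in
      1 + ((chi p - 1) * of_nat p) / ((of_nat p ^ 2 - chi p) * (of_nat p - 1))))"

end

theory Submission
  imports Defs "HOL-Number_Theory.Number_Theory"
begin


lemma primes_inf: "infinite {p::nat. prime p}" using primes_infinite by simp

lemma prime_seq_prime: "k \<ge> 1 \<Longrightarrow> prime (prime_seq k)"
  unfolding prime_seq_def using enumerate_in_set[OF primes_inf] by auto

lemma enum_ge: "Infinite_Set.enumerate {p::nat. prime p} k \<ge> k + 2"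
proof (induction k)
  case 0
  have "prime (Infinite_Set.enumerate {p::nat. prime p} 0)" using enumerate_in_set[OF primes_inf, of 0] by simp
  then have "2 \<le> Infinite_Set.enumerate {p::nat. prime p} 0" using prime_ge_2_nat by blast
  then show ?case by simp
next
  case (Suc k) then show ?case using enumerate_step[OF primes_inf, of k] by auto
qed

lemma prime_seq_ge: "k \<ge> 1 \<Longrightarrow> prime_seq k \<ge> k + 1"
  unfolding prime_seq_def using enum_ge[of "k-1"] by auto

lemma prime_seq_mono: "1 \<le> j \<Longrightarrow> j < k \<Longrightarrow> prime_seq j < prime_seq k"
  unfolding prime_seq_def using primes_inf by auto

lemma prime_seq_inc: "1 \<le> j \<Longrightarrow> prime_seq j + i \<le> prime_seq (j + i)"
proof (induction i)
  case 0 then show ?case by simp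
next
  case (Suc i) then show ?case using prime_seq_mono[of "j+i" "j + Suc i"] by auto
qed

lemma prime_seq_surj: "prime q \<Longrightarrow> \<exists>k\<ge>1. prime_seq k = q"
proof -
  assume "prime q"
  then obtain j where "Infinite_Set.enumerate {p::nat. prime p} j = q"
    using enumerate_Ex[OF primes_inf] by auto
  then show ?thesis unfolding prime_seq_def by (intro exI[of _ "Suc j"]) auto
qed

locale dchar =
  fixes q :: nat and chi :: "nat \<Rightarrow> complex"
  assumes dc: "dirichlet_character q chi"
begin

lemma one: "chi 1 = 1" using dc unfolding dirichlet_character_def by blast
lemma mult: "chi (m * n) = chi m * chi n" using dc unfolding dirichlet_character_def by blast
lemma per: "chi (n + q) = chi n" using dc unfolding dirichlet_character_def by blast
lemma nz: "chi n \<noteq> 0 \<longleftrightarrow> coprime n q" using dc unfolding dirichlet_character_def by blast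
lemma qpos: "q > 0" using dc unfolding dirichlet_character_def by blast

lemma pow: "chi (n ^ k) = chi n ^ k"
proof (induction k)
  case 0 show ?case using one by simp
next
  case (Suc k) show ?case using Suc mult[of n "n^k"] by simp
qed

lemma permod: "chi n = chi (n mod q)"
proof (induction n rule: less_induct)
  case (less n)
  show ?case
  proof (cases "n < q")
    case True then show ?thesis by simp
  next
    case False
    then have "chi n = chi (n - q)" using per[of "n-q"] by simp
    also have "\<dots> = chi ((n - q) mod q)" using less(1)[of "n-q"] qpos False by simp
    also have "(n - q) mod q = n mod q" using False by (simp add: mod_if)
    finally show ?thesis .
  qed
qed

lemma norm_le1: "norm (chi n) \<le> 1"
proof (cases "coprime n q")
  case False then have "chi n = 0" using nz by blast
  then show ?thesis by simp
next
  case True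
  have "[n ^ totient q = 1] (mod q)" using euler_theorem[OF True] .
  then have "(n ^ totient q) mod q = 1 mod q" unfolding cong_def .
  then have "chi (n ^ totient q) = chi 1" using permod[of "n ^ totient q"] permod[of 1] by argo
  then have "chi n ^ totient q = 1" using pow one by simp
  moreover have "totient q > 0" using qpos by simp
  ultimately have "norm (chi n) = 1"
    using power_eq_1_iff[of "chi n" "totient q"] by simp
  then show ?thesis by simp
qed

end


context dchar begin

definition G :: "nat \<Rightarrow> nat \<Rightarrow> complex" where
  "G s m = chi m / of_nat m ^ s"

lemma G_mult: "G s (a * b) = G s a * G s b"
  unfolding G_def by (simp add: mult power_mult_distrib)

lemma G_0: "s > 0 \<Longrightarrow> G s 0 = 0" unfolding G_def by simp
lemma G_1: "G s 1 = 1" unfolding G_def using one by simp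

lemma norm_G: "s \<ge> 2 \<Longrightarrow> norm (G s m) \<le> inverse (real m ^ 2)"
proof (cases "m = 0")
  case True assume s: "s \<ge> 2" then show ?thesis using G_0[of s] True by simp
next
  case False
  assume s: "s \<ge> 2"
  have "norm (G s m) = norm (chi m) / real m ^ s" unfolding G_def by (simp add: norm_divide norm_power)
  also have "\<dots> \<le> 1 / real m ^ s" using norm_le1[of m] False by (simp add: divide_right_mono)
  also have "\<dots> \<le> 1 / real m ^ 2" using False s
    by (intro divide_left_mono power_increasing) auto
  finally show ?thesis by (simp add: divide_inverse)
qed

lemma summable_r: "summable (\<lambda>m::nat. inverse (real m ^ 2))"
  using inverse_power_summable[of 2, where 'a=real] by simp

lemma G_sums: "s \<ge> 2 \<Longrightarrow> G s sums dirichlet_L chi s"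
proof -
  assume s: "s \<ge> 2"
  have "summable (\<lambda>m. norm (G s m))"
    by (rule summable_comparison_test[OF _ summable_r]) (use norm_G[OF s] in auto)
  then have "summable (G s)" by (rule summable_norm_cancel)
  then have "summable (\<lambda>n. G s (Suc n))" using summable_Suc_iff by blast
  then have "(\<lambda>n. G s (Suc n)) sums dirichlet_L chi s"
    unfolding dirichlet_L_def G_def by (simp add: summable_sums)
  then show ?thesis using sums_Suc_iff[of "G s"] G_0[of s] s by simp
qed

definition H :: "nat \<Rightarrow> nat set \<Rightarrow> nat \<Rightarrow> complex" where
  "H s T m = (if (\<forall>r\<in>T. \<not> r dvd m) then G s m else 0)"

lemma sieve:
  assumes s: "s \<ge> 2" and T: "finite T" "\<forall>r\<in>T. prime r"
  shows "(H s T has_sum (dirichlet_L chi s * (\<Prod>r\<in>T. (1 - G s r)))) UNIV"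
  using T
proof (induction T rule: finite_induct)
  case empty
  have "summable (\<lambda>m. norm (G s m))"
    by (rule summable_comparison_test[OF _ summable_r]) (use norm_G[OF s] in auto)
  then have "(G s has_sum dirichlet_L chi s) UNIV"
    using norm_summable_imp_has_sum G_sums[OF s] by blast
  then show ?case unfolding H_def by simp
next
  case (insert p T)
  define X where "X = dirichlet_L chi s * (\<Prod>r\<in>T. (1 - G s r))"
  have IH: "(H s T has_sum X) UNIV" using insert X_def by simp
  have p: "prime p" using insert by simp
  define M where "M m = (if p dvd m then H s T m else 0)" for m
  have Mp: "M (p * j) = G s p * H s T j" for j
  proof -
    have "(\<forall>r\<in>T. \<not> r dvd p * j) \<longleftrightarrow> (\<forall>r\<in>T. \<not> r dvd j)"
    proof -
      have "r dvd p * j \<longleftrightarrow> r dvd j" if "r \<in> T" for r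
      proof -
        have r: "prime r" "r \<noteq> p" using that insert by auto
        have "\<not> r dvd p" using r p primes_dvd_imp_eq by blast
        then show ?thesis using prime_dvd_mult_iff[OF r(1)] by auto
      qed
      then show ?thesis by auto
    qed
    then show ?thesis unfolding M_def H_def by (simp add: G_mult)
  qed
  have inj: "inj_on (\<lambda>j. p * j) UNIV" using p prime_gt_0_nat by (auto simp: inj_on_def)
  have "((\<lambda>j. G s p * H s T j) has_sum (G s p * X)) UNIV"
    by (rule has_sum_cmult_right[OF IH])
  then have "((M \<circ> (\<lambda>j. p * j)) has_sum (G s p * X)) UNIV"
    by (simp add: o_def Mp)
  then have "(M has_sum (G s p * X)) (range (\<lambda>j. p * j))"
    using has_sum_reindex[OF inj] by blast
  then have M: "(M has_sum (G s p * X)) UNIV"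
    by (rule has_sum_cong_neutral[THEN iffD1, rotated -1]) (auto simp: M_def)
  have "((\<lambda>m. H s T m + - M m) has_sum (X + - (G s p * X))) UNIV"
    by (intro has_sum_add IH has_sum_uminusI M)
  moreover have "H s (insert p T) m = H s T m + - M m" for m
    unfolding H_def M_def by auto
  moreover have "X + - (G s p * X) = dirichlet_L chi s * (\<Prod>r\<in>insert p T. (1 - G s r))"
    using insert X_def by (simp add: algebra_simps)
  ultimately show ?case by simp
qed

end


lemma prime_seq_inj: "prime_seq (Suc x) = prime_seq (Suc y) \<Longrightarrow> x = y"
proof (rule ccontr)
  assume e: "prime_seq (Suc x) = prime_seq (Suc y)" and "x \<noteq> y"
  then consider "x < y" | "y < x" by linarith
  then show False
  proof cases
    case 1 then show False using prime_seq_mono[of "Suc x" "Suc y"] e by simp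
  next
    case 2 then show False using prime_seq_mono[of "Suc y" "Suc x"] e by simp
  qed
qed

context dchar begin

lemma tail_lim: "(\<lambda>K. \<Sum>i. inverse (real (i + K) ^ 2)) \<longlonglongrightarrow> 0"
proof -
  let ?r = "\<lambda>m::nat. inverse (real m ^ 2)"
  have "(\<lambda>K. suminf ?r - (\<Sum>i<K. ?r i)) \<longlonglongrightarrow> suminf ?r - suminf ?r"
    by (intro tendsto_diff tendsto_const summable_LIMSEQ summable_r)
  moreover have "suminf ?r - (\<Sum>i<K. ?r i) = (\<Sum>i. ?r (i + K))" for K
    using suminf_split_initial_segment[OF summable_r, of K] by simp
  ultimately show ?thesis by simp
qed

lemma euler_lim:
  assumes s: "s \<ge> 2"
  shows "(\<lambda>N. dirichlet_L chi s * (\<Prod>k<N. (1 - G s (prime_seq (Suc k))))) \<longlonglongrightarrow> 1"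
proof -
  let ?r = "\<lambda>m::nat. inverse (real m ^ 2)"
  define X where "X N = dirichlet_L chi s * (\<Prod>k<N. (1 - G s (prime_seq (Suc k))))" for N
  have bound: "norm (X N - 1) \<le> (\<Sum>i. ?r (i + (N+1)))" for N
  proof -
    define T where "T = (\<lambda>k. prime_seq (Suc k)) ` {..<N}"
    have Tp: "\<forall>r\<in>T. prime r" unfolding T_def using prime_seq_prime by auto
    have inj: "inj_on (\<lambda>k. prime_seq (Suc k)) {..<N}"
      by (rule inj_onI) (rule prime_seq_inj)
    have "(\<Prod>r\<in>T. (1 - G s r)) = (\<Prod>k<N. (1 - G s (prime_seq (Suc k))))"
      unfolding T_def using prod.reindex[OF inj] by simp
    then have "(H s T has_sum X N) UNIV" using sieve[OF s _ Tp] unfolding T_def X_def by simp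
    then have HS: "H s T sums X N" by (rule has_sum_imp_sums)
    define D where "D m = H s T m - (if m = 1 then 1 else 0)" for m
    have "D sums (X N - 1)" unfolding D_def
      by (rule sums_diff[OF HS]) (use sums_single[of 1 "\<lambda>_. 1::complex"] in simp)
    have "\<forall>r\<in>T. \<not> r dvd 1" using Tp by (metis not_prime_1 nat_dvd_1_iff_1)
    then have H1: "H s T 1 = 1" unfolding H_def using G_1 by simp
    have H0: "H s T 0 = 0" unfolding H_def using G_0[of s] s by auto
    have Dz: "D m = 0" if "m < N + 1" for m
    proof (cases "m \<le> 1")
      case True then show ?thesis using H0 H1 unfolding D_def by (cases m) auto
    next
      case False
      then obtain r where r: "prime r" "r dvd m" using prime_factor_nat[of m] by auto
      then have "r \<le> m" using False by (intro dvd_imp_le) auto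
      obtain k where k: "k \<ge> 1" "prime_seq k = r" using prime_seq_surj[OF r(1)] by auto
      have "k + 1 \<le> m" using prime_seq_ge[OF k(1)] k \<open>r \<le> m\<close> by simp
      have "r = prime_seq (Suc (k - 1))" using k by simp
      moreover have "k - 1 \<in> {..<N}" using \<open>k + 1 \<le> m\<close> that by simp
      ultimately have "r \<in> T" unfolding T_def by blast
      then have "H s T m = 0" unfolding H_def using r by auto
      then show ?thesis unfolding D_def using False by simp
    qed
    have "(\<Sum>i<N+1. D i) = 0" using Dz by (intro sum.neutral) simp
    then have "(\<lambda>i. D (i + (N+1))) sums (X N - 1)"
      using sums_iff_shift[of D "N+1" "X N - 1"] \<open>D sums (X N - 1)\<close> by simp
    then have eq: "X N - 1 = (\<Sum>i. D (i + (N+1)))" by (simp add: sums_iff)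
    have nD: "norm (D m) \<le> ?r m" for m
    proof (cases "m = 1")
      case True then show ?thesis using H1 unfolding D_def by simp
    next
      case False
      then have "norm (D m) \<le> norm (G s m)" unfolding D_def H_def by auto
      also have "\<dots> \<le> ?r m" using norm_G[OF s] .
      finally show ?thesis .
    qed
    have sm: "summable (\<lambda>i. ?r (i + (N+1)))" by (subst summable_iff_shift) (rule summable_r)
    show ?thesis unfolding eq
      by (rule norm_suminf_le[OF _ sm]) (rule nD)
  qed
  have "(\<lambda>N. \<Sum>i. ?r (i + (N+1))) \<longlonglongrightarrow> 0"
    using LIMSEQ_Suc[OF tail_lim] by simp
  then have "(\<lambda>N. X N - 1) \<longlonglongrightarrow> 0"
    by (rule Lim_null_comparison[rotated]) (use bound in auto)
  then have "(\<lambda>N. X N - 1 + 1) \<longlonglongrightarrow> 0 + 1" by (intro tendsto_add) auto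
  then show ?thesis unfolding X_def by simp
qed

end


lemma poly4: "(t::real) \<ge> 0 \<Longrightarrow> 4 * t^4 \<le> (1+t) * ((1+t)^4 - t^4)"
proof -
  assume t: "t \<ge> 0"
  have "(1+t) * ((1+t)^4 - t^4) - 4 * t^4 = 1 + 5*t + 10*t^2 + 10*t^3"
    by (simp add: algebra_simps power2_eq_square power3_eq_cube power4_eq_xxxx)
  moreover have "1 + 5*t + 10*t^2 + 10*t^3 \<ge> 0" using t by simp
  ultimately show ?thesis by linarith
qed

lemma tel_step: "(m::real) \<ge> 2 \<Longrightarrow> 1 / m^5 \<le> (1 / (m-1)^4 - 1 / m^4) / 4"
proof -
  assume m: "m \<ge> 2"
  define t where "t = m - 1"
  have t: "t \<ge> 1" and mt: "m = 1 + t" using m unfolding t_def by auto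
  have "4 * t^4 \<le> (1+t) * ((1+t)^4 - t^4)" using poly4 t by simp
  then have "4 * t^4 \<le> m * (m^4 - t^4)" using mt by simp
  then have "4 * t^4 / (m^5 * t^4) \<le> m * (m^4 - t^4) / (m^5 * t^4)"
    using m t by (intro divide_right_mono) auto
  moreover have "4 * t^4 / (m^5 * t^4) = 4 / m^5" using t by simp
  moreover have "m * (m^4 - t^4) / (m^5 * t^4) = 1 / t^4 - 1 / m^4"
    using m t by (simp add: field_simps power_eq_if)
  ultimately have "4 / m^5 \<le> 1 / t^4 - 1 / m^4" by simp
  then show ?thesis unfolding t_def by simp
qed

lemma tel_sum:
  assumes P: "(P::real) \<ge> 2"
  shows "(\<Sum>j<J. 1 / (P + real j)^5) \<le> 1 / (4 * (P - 1)^4)"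
proof -
  define g where "g j = 1 / (P - 1 + real j)^4" for j
  have "(\<Sum>j<J. 1 / (P + real j)^5) \<le> (\<Sum>j<J. (g j - g (Suc j)) / 4)"
  proof (rule sum_mono)
    fix j assume "j \<in> {..<J}"
    have "1 / (P + real j)^5 \<le> (1 / (P + real j - 1)^4 - 1 / (P + real j)^4) / 4"
      using tel_step[of "P + real j"] P by simp
    also have "\<dots> = (g j - g (Suc j)) / 4" unfolding g_def by (simp add: algebra_simps)
    finally show "1 / (P + real j)^5 \<le> (g j - g (Suc j)) / 4" .
  qed
  also have "\<dots> = (g 0 - g J) / 4"
    using sum_lessThan_telescope'[of g J] by (simp add: sum_divide_distrib[symmetric])
  also have "\<dots> \<le> g 0 / 4" unfolding g_def using P by simp
  also have "\<dots> = 1 / (4 * (P - 1)^4)" unfolding g_def by simp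
  finally show ?thesis .
qed

lemma prod_bounds:
  fixes w :: "nat \<Rightarrow> complex"
  assumes "\<And>j. j < J \<Longrightarrow> norm (w j - 1) \<le> d j" "\<And>j. 0 \<le> d j" "(\<Sum>j<J. d j) < 1"
  shows "1 - (\<Sum>j<J. d j) \<le> norm (\<Prod>j<J. w j) \<and> norm (\<Prod>j<J. w j) \<le> 1 / (1 - (\<Sum>j<J. d j))"
  using assms
proof (induction J)
  case 0 then show ?case by simp
next
  case (Suc J)
  define S where "S = (\<Sum>j<J. d j)"
  have S0: "S \<ge> 0" unfolding S_def using Suc.prems(2) by (simp add: sum_nonneg)
  have SS: "(\<Sum>j<Suc J. d j) = S + d J" unfolding S_def by simp
  have lt: "S + d J < 1" using Suc.prems(3) SS by simp
  have dJ: "0 \<le> d J" "d J < 1" using Suc.prems(2)[of J] lt S0 by auto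
  have IH: "1 - S \<le> norm (\<Prod>j<J. w j)" "norm (\<Prod>j<J. w j) \<le> 1 / (1 - S)"
    using Suc.IH Suc.prems lt dJ unfolding S_def by auto
  have wJ: "norm (w J - 1) \<le> d J" using Suc.prems(1)[of J] by simp
  have wl: "1 - d J \<le> norm (w J)" using wJ norm_triangle_ineq3[of "w J" 1] by simp
  have wu: "norm (w J) \<le> 1 + d J" using wJ norm_triangle_ineq[of "w J - 1" 1] by simp
  have eq: "norm (\<Prod>j<Suc J. w j) = norm (\<Prod>j<J. w j) * norm (w J)" by (simp add: norm_mult)
  have "(1 - S) * (1 - d J) \<le> norm (\<Prod>j<J. w j) * norm (w J)"
    using IH(1) wl dJ lt by (intro mult_mono) auto
  moreover have "1 - (S + d J) \<le> (1 - S) * (1 - d J)" using S0 dJ by (simp add: algebra_simps)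
  ultimately have low: "1 - (S + d J) \<le> norm (\<Prod>j<Suc J. w j)" using eq by simp
  have "norm (\<Prod>j<J. w j) * norm (w J) \<le> 1 / (1 - S) * (1 + d J)"
    using IH(2) wu dJ lt S0 by (intro mult_mono) auto
  moreover have "1 / (1 - S) * (1 + d J) \<le> 1 / (1 - (S + d J))"
  proof -
    have "(1 + d J) * (1 - (S + d J)) \<le> 1 - S" using S0 dJ by (simp add: algebra_simps)
    then show ?thesis using lt S0 dJ by (simp add: field_simps)
  qed
  ultimately have up: "norm (\<Prod>j<Suc J. w j) \<le> 1 / (1 - (S + d J))" using eq by simp
  show ?case using low up SS by simp
qed


lemma nb: "norm (c::complex) \<le> 1 \<Longrightarrow> norm (c^k * complex_of_real a) \<le> \<bar>a\<bar>"
proof -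
  assume c: "norm c \<le> 1"
  have "norm c ^ k \<le> 1" using c by (simp add: power_le_one)
  then have "norm c ^ k * \<bar>a\<bar> \<le> \<bar>a\<bar>" by (simp add: mult_left_le_one_le)
  then show ?thesis by (simp add: norm_mult norm_power del: of_real_diff of_real_mult)
qed

lemma delta:
  fixes c :: complex and p :: nat
  assumes p: "p \<ge> 33" and c: "norm c \<le> 1"
  shows "norm ((1 + c / (of_nat p * (of_nat p ^ 2 - of_nat p - 1))) * (1 - c / of_nat p ^ 3) *
               (1 - c / of_nat p ^ 4) - 1) \<le> 3 / real p ^ 5"
proof -
  define x where "x = real p"
  have x: "x \<ge> 33" using p unfolding x_def by simp
  define t where "t = x^2 - x - 1"
  have xx: "x * x \<ge> 33 * x" using x by (intro mult_right_mono) auto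
  have t: "t \<ge> 1" unfolding t_def power2_eq_square using x xx by linarith
  define X where "X = 1 / (x * t)"
  define Y where "Y = 1 / x^3"
  define Z where "Z = 1 / x^4"
  have cX: "c / (of_nat p * (of_nat p ^ 2 - of_nat p - 1)) = c * of_real X"
    unfolding X_def t_def x_def by (simp add: divide_inverse)
  have cY: "c / of_nat p ^ 3 = c * of_real Y" unfolding Y_def x_def by (simp add: divide_inverse)
  have cZ: "c / of_nat p ^ 4 = c * of_real Z" unfolding Z_def x_def by (simp add: divide_inverse)
  have exp: "(1 + c * of_real X) * (1 - c * of_real Y) * (1 - c * of_real Z) - 1
      = c * of_real (X - Y - Z) + c^2 * of_real (Y*Z - X*Y - X*Z) + c^3 * of_real (X*Y*Z)"
    by (simp add: algebra_simps power2_eq_square power3_eq_cube)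
  have x0: "x \<noteq> 0" and t0: "t \<noteq> 0" using x t by auto
  have e1: "X - Y - Z = (x^4 - x^2*t - x*t) / (x^5 * t)"
    unfolding X_def Y_def Z_def using x0 t0 by (simp add: field_simps power_eq_if)
  have e2: "x^4 - x^2*t - x*t = 2*x^2 + x" unfolding t_def by (simp add: algebra_simps power_eq_if)
  have e3: "X*Y + X*Z = (x + 1) / (x^5 * t)"
    unfolding X_def Y_def Z_def using x0 t0 by (simp add: field_simps power_eq_if)
  have XYZ: "X - Y - Z + X*Y + X*Z = (2*x^2+2*x+1) / (x^5 * t)"
  proof -
    have "X - Y - Z + X*Y + X*Z = (X - Y - Z) + (X*Y + X*Z)" by (simp add: algebra_simps)
    also have "\<dots> = (2*x^2 + x) / (x^5 * t) + (x + 1) / (x^5 * t)" unfolding e1 e2 e3 ..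
    also have "\<dots> = (2*x^2+2*x+1) / (x^5 * t)" by (simp add: add_divide_distrib[symmetric] algebra_simps)
    finally show ?thesis .
  qed
  have pos1: "X \<ge> 0" "Y \<ge> 0" "Z \<ge> 0"
    unfolding X_def Y_def Z_def using x t by auto
  have pos2: "X - Y - Z \<ge> 0" unfolding e1 e2 using x t by simp
  note pos = pos1 pos2
  have "norm (c * of_real (X - Y - Z) + c^2 * of_real (Y*Z - X*Y - X*Z) + c^3 * of_real (X*Y*Z))
      \<le> norm (c * of_real (X - Y - Z)) + norm (c^2 * of_real (Y*Z - X*Y - X*Z)) + norm (c^3 * of_real (X*Y*Z))"
    by (meson norm_triangle_le norm_triangle_ineq add_mono order_refl)
  also have "\<dots> \<le> \<bar>X - Y - Z\<bar> + \<bar>Y*Z - X*Y - X*Z\<bar> + \<bar>X*Y*Z\<bar>"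
    using nb[OF c, of 1 "X - Y - Z"] nb[OF c, of 2 "Y*Z - X*Y - X*Z"] nb[OF c, of 3 "X*Y*Z"]
    by (intro add_mono) (simp_all del: of_real_diff of_real_mult)
  also have "\<dots> \<le> (X - Y - Z + X*Y + X*Z) + Y*Z + X*Y*Z" using pos by (auto simp: abs_le_iff)
  also have "\<dots> \<le> 2.5 / x^5 + 0.25 / x^5 + 0.25 / x^5"
  proof (intro add_mono)
    have "5 * t = 5*(x*x) - 5*x - 5" unfolding t_def power2_eq_square by (simp add: algebra_simps)
    then have "2*(2*x^2+2*x+1) \<le> 5 * t" unfolding power2_eq_square using xx x by (smt (verit))
    then have "2*x^2+2*x+1 \<le> 2.5 * t" by simp
    then have "(2*x^2+2*x+1) / (x^5 * t) \<le> (2.5 * t) / (x^5 * t)"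
      using x t by (intro divide_right_mono) auto
    also have "\<dots> = 2.5 / x^5" using t0 by simp
    finally show "X - Y - Z + X*Y + X*Z \<le> 2.5 / x^5" unfolding XYZ .
    have x2: "x^2 \<ge> 4" using xx x unfolding power2_eq_square by linarith
    have "Y * Z = (1 / x^2) * (1 / x^5)" unfolding Y_def Z_def by (simp add: power_eq_if)
    also have "\<dots> \<le> (1/4) * (1 / x^5)" using x2 x by (intro mult_right_mono) (auto simp: field_simps)
    finally show "Y * Z \<le> 0.25 / x^5" by simp
    have x3: "x^3 * t \<ge> 4" using x2 x t
    proof -
      have "x \<le> x^3" using x by (intro self_le_power) auto
      moreover have "x^3 * 1 \<le> x^3 * t" using t x by (intro mult_left_mono) auto
      ultimately show ?thesis using x by linarith
    qed
    have "X * Y * Z = (1 / (x^3 * t)) * (1 / x^5)" unfolding X_def Y_def Z_def by (simp add: power_eq_if)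
    also have "\<dots> \<le> (1/4) * (1 / x^5)" using x3 x by (intro mult_right_mono) (auto simp: field_simps)
    finally show "X * Y * Z \<le> 0.25 / x^5" by simp
  qed
  also have "\<dots> = 3 / x^5" by simp
  finally show ?thesis unfolding cX cY cZ exp x_def .
qed


lemma add1div: "(D::complex) \<noteq> 0 \<Longrightarrow> 1 + a / D = (D + a) / D" by (simp add: field_simps)

lemma ident:
  fixes c :: complex and p :: nat
  assumes p: "p \<ge> 2" and c: "norm c \<le> 1"
  shows "(1 + ((c - 1) * of_nat p) / ((of_nat p ^ 2 - c) * (of_nat p - 1))) * (1 - c / of_nat p ^ 2)
       = complex_of_real (1 - 1 / (real p * (real p - 1))) * (1 + c / (of_nat p * (of_nat p ^ 2 - of_nat p - 1)))"
proof -
  define X :: complex where "X = of_nat p"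
  have X0: "X \<noteq> 0" "X - 1 \<noteq> 0" unfolding X_def using p by auto
  have rp: "real p \<ge> 2" using p by simp
  have "(2::real)^2 \<le> real p ^ 2" using rp by (intro power_mono) auto
  then have "real p ^ 2 \<ge> 4" by simp
  then have "norm (X^2) \<noteq> norm c" unfolding X_def using c by (auto simp: norm_power)
  then have X2: "X^2 - c \<noteq> 0" by auto
  have "X^2 - X - 1 = complex_of_real (real p ^ 2 - real p - 1)" unfolding X_def by simp
  moreover have "real p * real p \<ge> 2 * real p" using rp by (intro mult_right_mono) auto
  then have "real p ^ 2 - real p - 1 \<noteq> 0" using rp unfolding power2_eq_square by linarith
  ultimately have X3: "X^2 - X - 1 \<noteq> 0" by (metis of_real_eq_0_iff)
  have "complex_of_real (1 - 1 / (real p * (real p - 1))) = 1 - 1 / (X * (X - 1))"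
    unfolding X_def by simp
  moreover have "(1 + ((c - 1) * X) / ((X ^ 2 - c) * (X - 1))) * (1 - c / X ^ 2)
       = (1 - 1 / (X * (X - 1))) * (1 + c / (X * (X ^ 2 - X - 1)))"
  proof -
    have h1: "1 + ((c - 1) * X) / ((X ^ 2 - c) * (X - 1)) = (X^3 - X^2 - X + c) / ((X^2 - c) * (X - 1))"
    proof -
      have D0: "(X ^ 2 - c) * (X - 1) \<noteq> 0" using X0 X2 by simp
      have "(X ^ 2 - c) * (X - 1) + (c - 1) * X = X^3 - X^2 - X + c"
        by (simp add: algebra_simps power2_eq_square power3_eq_cube)
      then show ?thesis using add1div[OF D0, of "(c - 1) * X"] by simp
    qed
    have h2: "1 - c / X^2 = (X^2 - c) / X^2" using X0 by (simp add: field_simps)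
    have h3: "1 - 1 / (X * (X - 1)) = (X^2 - X - 1) / (X * (X - 1))"
      using X0 by (simp add: field_simps) (simp add: algebra_simps power2_eq_square)
    have h4: "1 + c / (X * (X ^ 2 - X - 1)) = (X^3 - X^2 - X + c) / (X * (X^2 - X - 1))"
    proof -
      have D0: "X * (X ^ 2 - X - 1) \<noteq> 0" using X0 X3 by simp
      have "X * (X ^ 2 - X - 1) + c = X^3 - X^2 - X + c"
        by (simp add: algebra_simps power2_eq_square power3_eq_cube)
      then show ?thesis using add1div[OF D0, of c] by simp
    qed
    show ?thesis unfolding h1 h2 h3 h4 using X0 X2 X3
      by (simp add: power2_eq_square)
  qed
  ultimately show ?thesis unfolding X_def by simp
qed


lemma final_num:
  fixes P :: real
  assumes P: "P \<ge> 33"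
  defines "S0 \<equiv> 3 / (4 * (P - 1)^4)"
  shows "S0 < 1" "1 / (1 + P powr (-3.85)) \<le> 1 - S0" "1 / (1 - S0) \<le> 1 + 1 / P powr 3.85"
proof -
  define E where "E = P powr 3.85"
  have E0: "E > 0" unfolding E_def using P by simp
  have "P powr 3.85 \<le> P powr 4" using P by (intro powr_mono) auto
  then have EP: "E \<le> P^4" unfolding E_def using P by simp
  have "(32/33) * P \<le> P - 1" using P by simp
  then have "((32/33) * P)^4 \<le> (P - 1)^4" using P by (intro power_mono) auto
  then have h1: "(32/33)^4 * P^4 \<le> (P - 1)^4" by (metis power_mult_distrib)
  have "(33::real)^4 \<le> P^4" using P by (intro power_mono) auto
  then have h2: "P^4 \<ge> 6" by simp
  have c: "(32/33::real)^4 = 1048576/1185921" by (simp add: power_numeral_reduce)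
  have "4 * (P-1)^4 \<ge> 3 * (P^4 + 1)"
  proof -
    define a where "a = P^4"
    define b where "b = (P-1)^4"
    have "1048576 / 1185921 * a \<le> b" "6 \<le> a" using h1 h2 unfolding c a_def b_def by auto
    then have "1048576 * a \<le> 1185921 * b" "6 \<le> a" by (simp_all add: field_simps)
    then have "3 * (a + 1) \<le> 4 * b" by (smt (z3))
    then show ?thesis unfolding a_def b_def .
  qed
  then have h3: "4 * (P-1)^4 \<ge> 3 * (E + 1)" using EP by simp
  have P1: "(P - 1)^4 > 0" using P by simp
  have "S0 * (E+1) = 3*(E+1) / (4*(P-1)^4)" unfolding S0_def by simp
  also have "\<dots> \<le> 1" using h3 P1 by (simp add: pos_divide_le_eq)
  finally have key: "S0 * (E + 1) \<le> 1" .
  have S00: "S0 > 0" unfolding S0_def using P1 by simp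
  have "S0 * 1 < S0 * (E + 1)" using S00 E0 by (intro mult_strict_left_mono) auto
  then show S1: "S0 < 1" using key by simp
  have lin: "E \<le> (1 - S0) * (E + 1)"
  proof -
    have "(1 - S0) * (E + 1) = E + 1 - S0 * (E + 1)" by (simp add: algebra_simps)
    then show ?thesis using key by linarith
  qed
  have "P powr (-3.85) = 1 / E" unfolding E_def by (simp add: powr_minus_divide)
  then have "1 / (1 + P powr (-3.85)) = 1 / (1 + 1 / E)" by (simp only:)
  also have "\<dots> = E / (E + 1)" using E0 by (simp add: field_simps)
  also have "\<dots> \<le> 1 - S0" using lin E0 by (simp add: pos_divide_le_eq)
  finally show "1 / (1 + P powr (-3.85)) \<le> 1 - S0" .
  have "1 / (1 - S0) \<le> (E + 1) / E" using lin E0 S1 by (simp add: divide_simps) (simp add: algebra_simps)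
  also have "\<dots> = 1 + 1 / P powr 3.85" unfolding E_def using E0 E_def by (simp add: field_simps)
  finally show "1 / (1 - S0) \<le> 1 + 1 / P powr 3.85" .
qed


lemma b_bound:
  fixes c :: complex and p :: nat
  assumes p: "p \<ge> 2" and c: "norm c \<le> 1"
  shows "norm ((c - 1) * of_nat p / ((of_nat p ^ 2 - c) * (of_nat p - 1))) \<le> 2 / (real p - 1)^2"
proof -
  define x where "x = real p"
  have x: "x \<ge> 2" unfolding x_def using p by simp
  have "norm (c - 1) \<le> norm c + norm (1::complex)" by (rule norm_triangle_ineq4)
  then have n1: "norm (c - 1) \<le> 2" using c by simp
  have nX: "norm ((of_nat p :: complex) ^ 2) = x^2" unfolding x_def by (simp add: norm_power)
  have "norm ((of_nat p :: complex) ^ 2) - norm c \<le> norm ((of_nat p :: complex) ^ 2 - c)"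
    by (rule norm_triangle_ineq2)
  then have n2: "x^2 - 1 \<le> norm ((of_nat p :: complex) ^ 2 - c)" using nX c by simp
  have n3: "norm ((of_nat p :: complex) - 1) = x - 1"
  proof -
    have "(of_nat p :: complex) - 1 = complex_of_real (x - 1)" unfolding x_def by simp
    then have "norm ((of_nat p :: complex) - 1) = \<bar>x - 1\<bar>" by (simp only: norm_of_real)
    then show ?thesis using x by simp
  qed
  have xx: "x * x \<ge> 2 * x" using x by (intro mult_right_mono) auto
  have x21: "x^2 - 1 \<ge> 1" unfolding power2_eq_square using xx x by linarith
  have "norm ((c - 1) * of_nat p / ((of_nat p ^ 2 - c) * (of_nat p - 1)))
      = norm (c - 1) * x / (norm ((of_nat p :: complex) ^ 2 - c) * (x - 1))"
    unfolding x_def by (simp add: norm_mult norm_divide n3[unfolded x_def])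
  also have "\<dots> \<le> (2 * x) / ((x^2 - 1) * (x - 1))"
    using n1 n2 x x21 by (intro frac_le mult_right_mono mult_mono) auto
  also have "(x^2 - 1) * (x - 1) = (x + 1) * (x - 1)^2" by (simp add: algebra_simps power2_eq_square)
  also have "2 * x / ((x + 1) * (x - 1)^2) \<le> 2 * (x + 1) / ((x + 1) * (x - 1)^2)"
    using x by (intro divide_right_mono) auto
  also have "\<dots> = 2 / (x - 1)^2"
  proof -
    have "x + 1 \<noteq> 0" using x by simp
    then show ?thesis by (metis mult.commute mult_divide_mult_cancel_left_if)
  qed
  finally show ?thesis unfolding x_def .
qed

lemma a_bound:
  fixes p :: nat
  assumes p: "p \<ge> 2"
  shows "\<bar>(1 - 1 / (real p * (real p - 1))) - 1\<bar> \<le> 1 / (real p - 1)^2"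
proof -
  define x where "x = real p"
  have x: "x \<ge> 2" unfolding x_def using p by simp
  have "(x - 1)^2 \<le> x * (x - 1)" using x by (simp add: power2_eq_square mult_right_mono)
  then have "1 / (x * (x - 1)) \<le> 1 / (x - 1)^2" using x by (intro divide_left_mono) auto
  moreover have "x * (x - 1) > 0" using x by simp
  ultimately show ?thesis unfolding x_def[symmetric] by simp
qed


lemma lim_of_conv:
  fixes f :: "nat \<Rightarrow> 'a::{real_normed_field, banach}"
  assumes "convergent_prod f"
  shows "(\<lambda>N. \<Prod>k<N. f k) \<longlonglongrightarrow> prodinf f"
proof -
  have "(\<lambda>n. \<Prod>i\<le>n. f i) \<longlonglongrightarrow> prodinf f" by (rule convergent_prod_LIMSEQ[OF assms])
  then have "(\<lambda>n. \<Prod>i<Suc n. f i) \<longlonglongrightarrow> prodinf f" by (simp add: lessThan_Suc_atMost)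
  then show ?thesis by (rule filterlim_sequentially_Suc[THEN iffD1])
qed

lemma summable_sq: "summable (\<lambda>k. 2 / (real k + 1)^2)"
proof -
  have "summable (\<lambda>k. inverse (real (k + 1) ^ 2))"
    using summable_iff_shift[of "\<lambda>m. inverse (real m ^ 2)" 1]
    by (metis (no_types) inverse_power_summable[of 2, where 'a=real] le_refl)
  then have "summable (\<lambda>k. 2 * inverse (real (k + 1) ^ 2))" by (rule summable_mult)
  moreover have "(\<lambda>k. 2 * inverse (real (k + 1) ^ 2)) = (\<lambda>k. 2 / (real k + 1)^2)"
    by (simp add: divide_inverse add.commute)
  ultimately show ?thesis by (simp only:)
qed

lemma pk2: "prime_seq (Suc k) \<ge> k + 2" using prime_seq_ge[of "Suc k"] by simp

lemma sq_mono: "real p \<ge> real k + 2 \<Longrightarrow> c \<ge> 0 \<Longrightarrow> c / (real p - 1)^2 \<le> c / (real k + 1)^2"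
  by (intro divide_left_mono power_mono mult_pos_pos) auto

definition af :: "nat \<Rightarrow> real" where
  "af k = 1 - 1 / (real (prime_seq (Suc k)) * (real (prime_seq (Suc k)) - 1))"

lemma artin_eq: "artin_A = prodinf af" unfolding artin_A_def af_def by simp

lemma af_conv: "convergent_prod af"
proof -
  have "norm (af k - 1) \<le> 2 / (real k + 1)^2" for k
  proof -
    have "norm (af k - 1) \<le> 1 / (real (prime_seq (Suc k)) - 1)^2"
      using a_bound[of "prime_seq (Suc k)"] pk2[of k] unfolding af_def by simp
    also have "\<dots> \<le> 1 / (real k + 1)^2" using pk2[of k] by (intro sq_mono) auto
    also have "\<dots> \<le> 2 / (real k + 1)^2" by (simp add: divide_right_mono)
    finally show ?thesis .
  qed
  then have "summable (\<lambda>k. norm (af k - 1))"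
    by (intro summable_comparison_test[OF _ summable_sq]) auto
  then show ?thesis by (intro abs_convergent_prod_imp_convergent_prod summable_imp_abs_convergent_prod)
qed

lemma af_pos: "af k > 0"
proof -
  define x where "x = real (prime_seq (Suc k))"
  have x: "x \<ge> 2" unfolding x_def using pk2[of k] by simp
  have "x * (x - 1) \<ge> 2 * 1" using x by (intro mult_mono) auto
  then have "1 / (x * (x - 1)) < 1" by simp
  then show ?thesis unfolding af_def x_def[symmetric] by simp
qed

lemma artin_nz: "artin_A \<noteq> 0"
  unfolding artin_eq using prodinf_nonzero[OF af_conv] af_pos by (metis less_irrefl)

context dchar begin

definition bf :: "nat \<Rightarrow> complex" where
  "bf k = (let p = prime_seq (Suc k) in
      1 + ((chi p - 1) * of_nat p) / ((of_nat p ^ 2 - chi p) * (of_nat p - 1)))"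

lemma B_eq: "B_char chi = prodinf bf" unfolding B_char_def bf_def by simp

lemma bf_conv: "convergent_prod bf"
proof -
  have "norm (bf k - 1) \<le> 2 / (real k + 1)^2" for k
  proof -
    have "norm (bf k - 1) \<le> 2 / (real (prime_seq (Suc k)) - 1)^2"
      using b_bound[of "prime_seq (Suc k)" "chi (prime_seq (Suc k))"] pk2[of k] norm_le1
      unfolding bf_def Let_def by simp
    also have "\<dots> \<le> 2 / (real k + 1)^2" using pk2[of k] by (intro sq_mono) auto
    finally show ?thesis .
  qed
  then have "summable (\<lambda>k. norm (bf k - 1))"
    by (intro summable_comparison_test[OF _ summable_sq]) auto
  then show ?thesis by (intro abs_convergent_prod_imp_convergent_prod summable_imp_abs_convergent_prod)
qed

lemma L_facts:
  assumes s: "s \<ge> 2"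
  shows "dirichlet_L chi s \<noteq> 0"
    "(\<lambda>N. \<Prod>k<N. (1 - G s (prime_seq (Suc k)))) \<longlonglongrightarrow> 1 / dirichlet_L chi s"
proof -
  have lim: "(\<lambda>N. dirichlet_L chi s * (\<Prod>k<N. (1 - G s (prime_seq (Suc k))))) \<longlonglongrightarrow> 1"
    by (rule euler_lim[OF s])
  show nz: "dirichlet_L chi s \<noteq> 0"
  proof
    assume "dirichlet_L chi s = 0"
    then have "(\<lambda>N. 0::complex) \<longlonglongrightarrow> 1" using lim by simp
    then show False using LIMSEQ_unique[OF tendsto_const] by fastforce
  qed
  have "(\<lambda>N. dirichlet_L chi s * (\<Prod>k<N. (1 - G s (prime_seq (Suc k)))) / dirichlet_L chi s)
        \<longlonglongrightarrow> 1 / dirichlet_L chi s"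
    by (intro tendsto_divide lim tendsto_const nz)
  then show "(\<lambda>N. \<Prod>k<N. (1 - G s (prime_seq (Suc k)))) \<longlonglongrightarrow> 1 / dirichlet_L chi s"
    using nz by simp
qed

end


lemma nzD:
  fixes c :: complex
  assumes c: "norm c \<le> 1" and D: "D \<ge> 2"
  shows "1 + c / complex_of_real D \<noteq> 0" "1 - c / complex_of_real D \<noteq> 0"
proof -
  have "norm (c / complex_of_real D) = norm c / D" using D by (simp add: norm_divide)
  also have "\<dots> \<le> 1 / D" using c D by (simp add: divide_right_mono)
  also have "\<dots> < 1" using D by simp
  finally have w: "norm (c / complex_of_real D) < 1" .
  show "1 + c / complex_of_real D \<noteq> 0"
  proof
    assume "1 + c / complex_of_real D = 0"
    then have "c / complex_of_real D = -1" by (simp add: add_eq_0_iff)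
    then show False using w by simp
  qed
  show "1 - c / complex_of_real D \<noteq> 0"
  proof
    assume "1 - c / complex_of_real D = 0"
    then have "c / complex_of_real D = 1" by simp
    then show False using w by simp
  qed
qed

context dchar begin

definition uf :: "nat \<Rightarrow> complex" where
  "uf p = (1 + chi p / (of_nat p * (of_nat p ^ 2 - of_nat p - 1))) *
          (1 - chi p / of_nat p ^ 3) * (1 - chi p / of_nat p ^ 4)"

lemma uf_nz:
  assumes p: "p \<ge> 2"
  shows "uf p \<noteq> 0"
proof -
  define x where "x = real p"
  have x: "x \<ge> 2" unfolding x_def using p by simp
  have xx: "x * x \<ge> 2 * x" using x by (intro mult_right_mono) auto
  have t: "x^2 - x - 1 \<ge> 1" unfolding power2_eq_square using xx x by linarith
  have D1: "x * (x^2 - x - 1) \<ge> 2" using mult_mono[of 2 x 1 "x^2-x-1"] x t by simp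
  have "x \<le> x^3" using x by (intro self_le_power) auto
  then have D2: "x^3 \<ge> 2" using x by linarith
  have "x \<le> x^4" using x by (intro self_le_power) auto
  then have D3: "x^4 \<ge> 2" using x by linarith
  have e1: "(of_nat p * (of_nat p ^ 2 - of_nat p - 1) :: complex) = complex_of_real (x * (x^2 - x - 1))"
    unfolding x_def by simp
  have e2: "(of_nat p ^ 3 :: complex) = complex_of_real (x^3)" unfolding x_def by simp
  have e3: "(of_nat p ^ 4 :: complex) = complex_of_real (x^4)" unfolding x_def by simp
  have f1: "1 + chi p / complex_of_real (x * (x^2 - x - 1)) \<noteq> 0" by (rule nzD(1)[OF norm_le1 D1])
  have f2: "1 - chi p / complex_of_real (x^3) \<noteq> 0" by (rule nzD(2)[OF norm_le1 D2])
  have f3: "1 - chi p / complex_of_real (x^4) \<noteq> 0" by (rule nzD(2)[OF norm_le1 D3])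
  show ?thesis unfolding uf_def e1 e2 e3 using f1 f2 f3 by (simp only: mult_eq_0_iff de_Morgan_disj) simp
qed

lemma factor_id:
  "bf k * (1 - G 2 (prime_seq (Suc k))) * (1 - G 3 (prime_seq (Suc k))) * (1 - G 4 (prime_seq (Suc k)))
   = complex_of_real (af k) * uf (prime_seq (Suc k))"
proof -
  define p where "p = prime_seq (Suc k)"
  have p: "p \<ge> 2" unfolding p_def using pk2[of k] by simp
  have h: "bf k * (1 - G 2 p) = complex_of_real (af k) * (1 + chi p / (of_nat p * (of_nat p ^ 2 - of_nat p - 1)))"
    using ident[OF p norm_le1[of p]] unfolding bf_def af_def G_def p_def Let_def by simp
  have "bf k * (1 - G 2 p) * (1 - G 3 p) * (1 - G 4 p) = (bf k * (1 - G 2 p)) * ((1 - G 3 p) * (1 - G 4 p))"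
    by (simp only: mult.assoc)
  also have "\<dots> = complex_of_real (af k) * (1 + chi p / (of_nat p * (of_nat p ^ 2 - of_nat p - 1))) *
      ((1 - chi p / of_nat p ^ 3) * (1 - chi p / of_nat p ^ 4))"
    unfolding h by (simp only: G_def)
  also have "\<dots> = complex_of_real (af k) * uf p" unfolding uf_def by (simp only: mult.assoc)
  finally show ?thesis unfolding p_def .
qed

end


context dchar begin

definition Qc :: complex where
  "Qc = B_char chi * (1 / dirichlet_L chi 2) * (1 / dirichlet_L chi 3) * (1 / dirichlet_L chi 4)
        / complex_of_real artin_A"

lemma UP_lim: "(\<lambda>N. \<Prod>k<N. uf (prime_seq (Suc k))) \<longlonglongrightarrow> Qc"
proof -
  define e where "e s k = 1 - G s (prime_seq (Suc k))" for s k
  have eq: "(\<Prod>k<N. bf k) * (\<Prod>k<N. e 2 k) * (\<Prod>k<N. e 3 k) * (\<Prod>k<N. e 4 k)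
        = complex_of_real (\<Prod>k<N. af k) * (\<Prod>k<N. uf (prime_seq (Suc k)))" for N
  proof -
    have "(\<Prod>k<N. bf k) * (\<Prod>k<N. e 2 k) * (\<Prod>k<N. e 3 k) * (\<Prod>k<N. e 4 k)
        = (\<Prod>k<N. bf k * e 2 k * e 3 k * e 4 k)" by (simp only: prod.distrib)
    also have "\<dots> = (\<Prod>k<N. complex_of_real (af k) * uf (prime_seq (Suc k)))"
      unfolding e_def by (rule prod.cong[OF refl]) (rule factor_id)
    also have "\<dots> = complex_of_real (\<Prod>k<N. af k) * (\<Prod>k<N. uf (prime_seq (Suc k)))"
      by (simp add: prod.distrib)
    finally show ?thesis .
  qed
  have l1: "(\<lambda>N. (\<Prod>k<N. bf k) * (\<Prod>k<N. e 2 k) * (\<Prod>k<N. e 3 k) * (\<Prod>k<N. e 4 k))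
      \<longlonglongrightarrow> B_char chi * (1 / dirichlet_L chi 2) * (1 / dirichlet_L chi 3) * (1 / dirichlet_L chi 4)"
    unfolding e_def B_eq
    by (intro tendsto_mult lim_of_conv bf_conv L_facts(2)) auto
  have l2: "(\<lambda>N. complex_of_real (\<Prod>k<N. af k)) \<longlonglongrightarrow> complex_of_real artin_A"
    unfolding artin_eq by (intro tendsto_of_real lim_of_conv af_conv)
  have nzA: "complex_of_real artin_A \<noteq> 0" using artin_nz by simp
  have l3: "(\<lambda>N. (complex_of_real (\<Prod>k<N. af k) * (\<Prod>k<N. uf (prime_seq (Suc k)))) / complex_of_real (\<Prod>k<N. af k))
      \<longlonglongrightarrow> Qc"
    unfolding Qc_def eq[symmetric] by (intro tendsto_divide l1 l2 nzA)
  have "(\<Prod>k<N. af k) \<noteq> 0" for N using af_pos by (metis (no_types) less_irrefl prod_zero_iff finite_lessThan)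
  then show ?thesis using l3 by simp
qed

lemma UP_split: "(\<Prod>k<J + n. uf (prime_seq (Suc k))) =
    (\<Prod>k<n. uf (prime_seq (Suc k))) * (\<Prod>j<J. uf (prime_seq (Suc (n + j))))"
  by (induction J) (simp_all add: add.commute mult.assoc)

end


context dchar begin

lemma main_loc:
  assumes n: "n \<ge> 31"
  shows "\<exists>R1 :: complex.
     B_char chi = R1 * complex_of_real artin_A * dirichlet_L chi 2 * dirichlet_L chi 3 * dirichlet_L chi 4 *
       (\<Prod>k=1..n. (1 + chi (prime_seq k) / (of_nat (prime_seq k) *
                        (of_nat (prime_seq k) ^ 2 - of_nat (prime_seq k) - 1))) *
                   (1 - chi (prime_seq k) / of_nat (prime_seq k) ^ 3) *
                   (1 - chi (prime_seq k) / of_nat (prime_seq k) ^ 4))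
     \<and> 1 / (1 + real (prime_seq (n + 1)) powr (-3.85)) \<le> cmod R1
     \<and> cmod R1 \<le> 1 + 1 / real (prime_seq (n + 1)) powr 3.85"
proof -
  define F where "F = (\<Prod>k<n. uf (prime_seq (Suc k)))"
  have Feq: "(\<Prod>k=1..n. (1 + chi (prime_seq k) / (of_nat (prime_seq k) *
                        (of_nat (prime_seq k) ^ 2 - of_nat (prime_seq k) - 1))) *
                   (1 - chi (prime_seq k) / of_nat (prime_seq k) ^ 3) *
                   (1 - chi (prime_seq k) / of_nat (prime_seq k) ^ 4)) = F"
    unfolding F_def uf_def using prod.atLeast1_atMost_eq[of "\<lambda>k. uf (prime_seq k)" n]
    unfolding uf_def by simp
  have F0: "F \<noteq> 0" unfolding F_def using uf_nz pk2
    by (metis (no_types, lifting) finite_lessThan le_add2 order_trans prod_zero_iff)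
  define Tl where "Tl J = (\<Prod>j<J. uf (prime_seq (Suc (n + j))))" for J
  define R1 where "R1 = Qc / F"
  have "(\<lambda>J. (\<Prod>k<J + n. uf (prime_seq (Suc k)))) \<longlonglongrightarrow> Qc"
    by (rule LIMSEQ_ignore_initial_segment[OF UP_lim])
  then have "(\<lambda>J. (\<Prod>k<J + n. uf (prime_seq (Suc k))) / F) \<longlonglongrightarrow> Qc / F"
    by (intro tendsto_divide tendsto_const F0)
  moreover have "(\<Prod>k<J + n. uf (prime_seq (Suc k))) / F = Tl J" for J
    unfolding UP_split Tl_def F_def[symmetric] using F0 by simp
  ultimately have TlR: "Tl \<longlonglongrightarrow> R1" unfolding R1_def by simp
  define P where "P = real (prime_seq (n + 1))"
  have P: "P \<ge> 33" unfolding P_def using prime_seq_ge[of "n+1"] n by simp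
  define d where "d j = 3 / (P + real j)^5" for j
  have d0: "d j \<ge> 0" for j unfolding d_def using P by simp
  have bnd: "norm (uf (prime_seq (Suc (n + j))) - 1) \<le> d j" for j
  proof -
    define p where "p = prime_seq (Suc (n + j))"
    have "prime_seq (Suc n) + j \<le> prime_seq (Suc n + j)" by (rule prime_seq_inc) simp
    then have pP: "real p \<ge> P + real j" unfolding p_def P_def by simp
    then have p33: "p \<ge> 33" using P by linarith
    have "norm (uf p - 1) \<le> 3 / real p ^ 5" unfolding uf_def by (rule delta[OF p33 norm_le1])
    also have "\<dots> \<le> d j" unfolding d_def using pP P
      by (intro divide_left_mono power_mono mult_pos_pos) auto
    finally show ?thesis unfolding p_def .
  qed
  define S0 where "S0 = 3 / (4 * (P - 1)^4)"
  have sumd: "(\<Sum>j<J. d j) \<le> S0" for J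
  proof -
    have "(\<Sum>j<J. d j) = 3 * (\<Sum>j<J. 1 / (P + real j)^5)" unfolding d_def by (simp add: sum_distrib_left)
    also have "\<dots> \<le> 3 * (1 / (4 * (P - 1)^4))" using tel_sum[of P J] P by simp
    finally show ?thesis unfolding S0_def by simp
  qed
  have S1: "S0 < 1" unfolding S0_def using final_num(1)[OF P] .
  have TB: "1 - S0 \<le> norm (Tl J) \<and> norm (Tl J) \<le> 1 / (1 - S0)" for J
  proof -
    have "(\<Sum>j<J. d j) < 1" using sumd[of J] S1 by linarith
    then have pb: "1 - (\<Sum>j<J. d j) \<le> norm (Tl J) \<and> norm (Tl J) \<le> 1 / (1 - (\<Sum>j<J. d j))"
      unfolding Tl_def by (intro prod_bounds bnd d0)
    have "1 / (1 - (\<Sum>j<J. d j)) \<le> 1 / (1 - S0)"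
      using sumd[of J] S1 by (intro divide_left_mono mult_pos_pos) auto
    then show ?thesis using pb sumd[of J] by linarith
  qed
  have nR: "(\<lambda>J. norm (Tl J)) \<longlonglongrightarrow> norm R1" by (intro tendsto_norm TlR)
  have lo: "1 - S0 \<le> norm R1"
    by (rule tendsto_lowerbound[OF nR]) (use TB in auto)
  have up: "norm R1 \<le> 1 / (1 - S0)"
    by (rule tendsto_upperbound[OF nR]) (use TB in auto)
  have nzL: "dirichlet_L chi 2 \<noteq> 0" "dirichlet_L chi 3 \<noteq> 0" "dirichlet_L chi 4 \<noteq> 0"
    using L_facts(1) by auto
  have nzA: "complex_of_real artin_A \<noteq> 0" using artin_nz by simp
  have eqB: "B_char chi = R1 * complex_of_real artin_A * dirichlet_L chi 2 * dirichlet_L chi 3 * dirichlet_L chi 4 * F"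
    unfolding R1_def Qc_def using F0 nzL nzA by (simp add: field_simps)
  show ?thesis
    apply (rule exI[of _ R1])
    unfolding Feq
    using eqB lo up final_num(2,3)[OF P] unfolding S0_def P_def by simp
qed

end

theorem mainTheorem15:
  fixes q n :: nat and chi :: "nat \<Rightarrow> complex"
  assumes "dirichlet_character q chi" and "n \<ge> 31"
  shows "\<exists>R1 :: complex.
     B_char chi = R1 * complex_of_real artin_A * dirichlet_L chi 2 * dirichlet_L chi 3 * dirichlet_L chi 4 *
       (\<Prod>k=1..n. (1 + chi (prime_seq k) / (of_nat (prime_seq k) *
                        (of_nat (prime_seq k) ^ 2 - of_nat (prime_seq k) - 1))) *
                   (1 - chi (prime_seq k) / of_nat (prime_seq k) ^ 3) *
                   (1 - chi (prime_seq k) / of_nat (prime_seq k) ^ 4))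
     \<and> 1 / (1 + real (prime_seq (n + 1)) powr (-3.85)) \<le> cmod R1
     \<and> cmod R1 \<le> 1 + 1 / real (prime_seq (n + 1)) powr 3.85"
proof -
  interpret dchar q chi by unfold_locales (rule assms(1))
  show ?thesis by (rule main_loc[OF assms(2)])
qed


end
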